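(* Let $\chi\in\chi(G)$ be a character and $\lambda\in\Lambda^\chi$. If $C\subset A\subset[n]$ are subsets with $L(C)\subset S^\chi_\lambda$ and $L(A)\subset S^\chi_\lambda$, then $L(B)\subset S^\chi_\lambda$ for every $B$ with $C\subset B\subset A$.
   Context: $G$ diagonalizable over $\mathbf C$ acting on $X=\mathbf A^n_{\mathbf C}$ by $g\cdot x=(\chi_1(g)x_1,\dots,\chi_n(g)x_n)$. $\chi(G)$ characters, $\Gamma(G)$ one-parameter subgroups, pairing $\chi(\lambda(t))=t^{\langle\chi,\lambda\rangle}$; fixed norm on $\Gamma(G)$ from an inner product on $\Gamma(G)_{\mathbf R}$ integral on $\Gamma(G)$. $[n]=\{1,\dots,n\}$. $x$ is $\chi$-unstable if some $\lambda$ with $\lim_{t\to0}\lambda(t)x$ existing has $\langle\chi,\lambda\rangle<0$; for unstable $x$, $\lambda_{\chi,x}$ is the unique indivisible one-parameter subgroup with existing limit minimizing $\langle\chi,\lambda\rangle/\|\lambda\|$ among nonzero such. $\Lambda^\chi=\{\lambda_{\chi,x}\}$, $S^\chi_\lambda=\{x\text{ unstable}:\lambda_{\chi,x}=\lambda\}$. For $S\subset[n]$, $L(S)=\{x:x_i\ne0\iff i\in S\}$. *)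

theory Defs
  imports "HOL-Analysis.Analysis"
begin

text \<open>
  The diagonalizable group G enters only through its lattice of
  one-parameter subgroups Gamma(G), identified with int^'r (an integral basis), and the
  pairing of characters with one-parameter subgroups.  A character is recorded by the
  linear functional it induces on Gamma(G), i.e. a vector in int^'r with
  pairing <chi,lambda> = sum_i chi_i * lambda_i.  The coordinate characters chi_1..chi_n
  of the action are the map  wt :: 'n => int^'r  (the index type 'n plays the role of [n]).
  The inner product on Gamma(G)_R, integral on Gamma(G), is given by a symmetric,
  positive definite integer Gram matrix Q.
\<close>

definition pair :: "int^'r::finite \<Rightarrow> int^'r \<Rightarrow> int" where
  "pair c l = (\<Sum>i\<in>UNIV. c$i * l$i)"

definition inner_prod_ok :: "int^'r::finite^'r \<Rightarrow> bool" where
  "inner_prod_ok Q \<longleftrightarrow> (\<forall>i j. Q$i$j = Q$j$i) \<and>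
     (\<forall>v::real^'r. v \<noteq> 0 \<longrightarrow> (\<Sum>i\<in>UNIV. \<Sum>j\<in>UNIV. v$i * real_of_int (Q$i$j) * v$j) > 0)"

definition lnorm :: "int^'r::finite^'r \<Rightarrow> int^'r \<Rightarrow> real" where
  "lnorm Q l = sqrt (real_of_int (\<Sum>i\<in>UNIV. \<Sum>j\<in>UNIV. l$i * Q$i$j * l$j))"

definition ops_act :: "('n::finite \<Rightarrow> int^'r::finite) \<Rightarrow> int^'r \<Rightarrow> complex \<Rightarrow> complex^'n \<Rightarrow> complex^'n" where
  "ops_act wt l t x = (\<chi> i. t powi (pair (wt i) l) * x$i)"

definition limit_exists :: "('n::finite \<Rightarrow> int^'r::finite) \<Rightarrow> int^'r \<Rightarrow> complex^'n \<Rightarrow> bool" where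
  "limit_exists wt l x \<longleftrightarrow> (\<exists>y. ((\<lambda>t. ops_act wt l t x) \<longlongrightarrow> y) (at 0))"

definition unstable :: "('n::finite \<Rightarrow> int^'r::finite) \<Rightarrow> int^'r \<Rightarrow> complex^'n \<Rightarrow> bool" where
  "unstable wt c x \<longleftrightarrow> (\<exists>l. limit_exists wt l x \<and> pair c l < 0)"

definition indivisible :: "int^'r \<Rightarrow> bool" where
  "indivisible l \<longleftrightarrow> l \<noteq> 0 \<and> (\<forall>(k::int) m. l = k *s m \<longrightarrow> k = 1 \<or> k = -1)"

definition opt_ops :: "('n::finite \<Rightarrow> int^'r::finite) \<Rightarrow> int^'r^'r \<Rightarrow> int^'r \<Rightarrow> complex^'n \<Rightarrow> int^'r" where
  "opt_ops wt Q c x = (THE l. indivisible l \<and> limit_exists wt l x \<and>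
      (\<forall>m. m \<noteq> 0 \<and> limit_exists wt m x \<longrightarrow>
         real_of_int (pair c l) / lnorm Q l \<le> real_of_int (pair c m) / lnorm Q m))"

definition Lambda_set :: "('n::finite \<Rightarrow> int^'r::finite) \<Rightarrow> int^'r^'r \<Rightarrow> int^'r \<Rightarrow> (int^'r) set" where
  "Lambda_set wt Q c = {opt_ops wt Q c x | x. unstable wt c x}"

definition stratum :: "('n::finite \<Rightarrow> int^'r::finite) \<Rightarrow> int^'r^'r \<Rightarrow> int^'r \<Rightarrow> int^'r \<Rightarrow> (complex^'n) set" where
  "stratum wt Q c l = {x. unstable wt c x \<and> opt_ops wt Q c x = l}"

definition Lcell :: "'n::finite set \<Rightarrow> (complex^'n) set" where
  "Lcell S = {x. \<forall>i. x$i \<noteq> 0 \<longleftrightarrow> i \<in> S}"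

end

theory Submission
  imports Defs
begin


lemma hamel_functional:
  "\<exists>\<phi>::real \<Rightarrow> rat. (\<forall>x y. \<phi> (x + y) = \<phi> x + \<phi> y) \<and> (\<forall>q x. \<phi> (of_rat q * x) = q * \<phi> x) \<and> \<phi> 1 = 1"
proof -
  interpret vp: vector_space_pair "\<lambda>q x. of_rat q * (x::real)" "(*) :: rat \<Rightarrow> rat \<Rightarrow> rat"
    by unfold_locales (auto simp: algebra_simps of_rat_add of_rat_mult)
  have ind: "vp.vs1.independent {1::real}"
    by (rule vp.vs1.independent_insertI) (auto simp: vp.vs1.span_empty vp.vs1.independent_empty)
  define \<phi> where "\<phi> = vp.construct {1::real} (\<lambda>_. 1)"
  have lin: "Vector_Spaces.linear (\<lambda>q x. of_rat q * (x::real)) ((*) :: rat \<Rightarrow> rat \<Rightarrow> rat) \<phi>"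
    unfolding \<phi>_def by (rule vp.linear_construct[OF ind])
  have "\<phi> 1 = 1" unfolding \<phi>_def by (rule vp.construct_basis[OF ind]) simp
  with lin show ?thesis unfolding Vector_Spaces.linear_iff by blast
qed


definition rv :: "int^'r::finite \<Rightarrow> real^'r" where
  "rv l = (\<chi> i. real_of_int (l$i))"

definition bil :: "int^'r::finite^'r \<Rightarrow> real^'r \<Rightarrow> real^'r \<Rightarrow> real" where
  "bil Q u v = (\<Sum>i\<in>UNIV. \<Sum>j\<in>UNIV. u$i * real_of_int (Q$i$j) * v$j)"

definition xq :: "int^'r::finite^'r \<Rightarrow> real^'r \<Rightarrow> real^'r" where
  "xq Q u = (\<chi> j. \<Sum>i\<in>UNIV. u$i * real_of_int (Q$i$j))"

lemma inner_sum_vec: "(x::real^'r::finite) \<bullet> y = (\<Sum>i\<in>UNIV. x$i * y$i)"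
  by (simp add: inner_vec_def)

lemma bil_xq: "bil Q u d = xq Q u \<bullet> d"
  unfolding bil_def xq_def inner_sum_vec
  by (subst sum.swap) (simp add: sum_distrib_right)

lemma bil_diff_left: "bil Q (u - v) w = bil Q u w - bil Q v w"
  unfolding bil_xq xq_def inner_sum_vec
  by (simp add: algebra_simps sum_subtractf sum_distrib_left sum_distrib_right)

lemma bil_diff_right: "bil Q w (u - v) = bil Q w u - bil Q w v"
  unfolding bil_xq inner_diff_right ..

lemma posdef: "inner_prod_ok Q \<Longrightarrow> v \<noteq> 0 \<Longrightarrow> bil Q v v > 0"
  unfolding inner_prod_ok_def bil_def by blast

lemma phi_sum:
  assumes add: "\<forall>x y. \<phi> (x + y) = \<phi> x + (\<phi> y::rat)" and sc: "\<forall>q x. \<phi> (of_rat q * x) = q * \<phi> x"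
  shows "\<phi> (\<Sum>j\<in>A. of_rat (a j) * f j) = (\<Sum>j\<in>A. a j * \<phi> (f j))"
proof (induction A rule: infinite_finite_induct)
  case (infinite A)
  have "\<phi> 0 = 0" using add by (metis add.right_neutral add_left_cancel)
  then show ?case using infinite by simp
next
  case empty
  have "\<phi> 0 = 0" using add by (metis add.right_neutral add_left_cancel)
  then show ?case by simp
next
  case (insert x F)
  then show ?case using add sc by simp
qed

lemma rational_point:
  fixes Q :: "int^'r::finite^'r" and v :: "real^'r" and c :: "int^'r"
  assumes Q: "inner_prod_ok Q" and fin: "finite Wi"
    and hw: "\<forall>w\<in>Wi. rv w \<bullet> v = 0" and hc: "rv c \<bullet> v = -1"
    and hd: "\<forall>d. (\<forall>w\<in>Wi. rv w \<bullet> d = 0) \<and> rv c \<bullet> d = 0 \<longrightarrow> bil Q v d = 0"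
  shows "\<forall>j. v$j \<in> \<rat>"
proof -
  define S where "S = rv ` (insert c Wi)"
  have finS: "finite S" using fin unfolding S_def by simp
  obtain y z where y: "y \<in> span S" and z: "\<And>w. w \<in> span S \<Longrightarrow> orthogonal z w" and xyz: "xq Q v = y + z"
    using orthogonal_subspace_decomp_exists by blast
  have zd: "(\<forall>w\<in>Wi. rv w \<bullet> z = 0) \<and> rv c \<bullet> z = 0"
  proof -
    have "\<forall>w\<in>S. w \<bullet> z = 0" using z[OF span_base] by (metis orthogonal_def inner_commute)
    thus ?thesis unfolding S_def by auto
  qed
  have "xq Q v \<bullet> z = 0" using hd zd bil_xq by metis
  moreover have "y \<bullet> z = 0" using z[OF y] by (simp add: orthogonal_def inner_commute)
  ultimately have "z \<bullet> z = 0" using xyz by (simp add: inner_add_left)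
  hence "z = 0" by simp
  hence xspan: "xq Q v \<in> span S" using xyz y by simp
  then obtain u where u: "xq Q v = (\<Sum>w\<in>S. u w *\<^sub>R w)"
    using span_finite[OF finS] by auto
  obtain \<phi> :: "real \<Rightarrow> rat" where add: "\<forall>x y. \<phi> (x + y) = \<phi> x + \<phi> y"
    and sc: "\<forall>q x. \<phi> (of_rat q * x) = q * \<phi> x" and one: "\<phi> 1 = 1"
    using hamel_functional by blast
  have phi0: "\<phi> 0 = 0" using add by (metis add.right_neutral add_left_cancel)
  have phiint: "\<phi> (\<Sum>j\<in>A. of_int (a j) * f j) = (\<Sum>j\<in>A. of_int (a j) * \<phi> (f j))" for A a f
    using phi_sum[OF add sc, where A=A and a="\<lambda>j. of_int (a j)" and f=f] by simp
  have phiint': "\<phi> (\<Sum>j\<in>A. f j * of_int (a j)) = (\<Sum>j\<in>A. \<phi> (f j) * of_int (a j))" for A a f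
  proof -
    have "\<phi> (\<Sum>j\<in>A. f j * of_int (a j)) = \<phi> (\<Sum>j\<in>A. of_int (a j) * f j)" by (simp add: mult.commute)
    also have "\<dots> = (\<Sum>j\<in>A. of_int (a j) * \<phi> (f j))" by (rule phiint)
    also have "\<dots> = (\<Sum>j\<in>A. \<phi> (f j) * of_int (a j))" by (simp add: mult.commute)
    finally show ?thesis .
  qed
  define v' where "v' = (\<chi> j. real_of_rat (\<phi> (v$j)))"
  have rvphi: "rv w \<bullet> v' = of_rat (\<phi> (rv w \<bullet> v))" for w
  proof -
    have "\<phi> (\<Sum>j\<in>UNIV. of_int (w$j) * v$j) = (\<Sum>j\<in>UNIV. of_int (w$j) * \<phi> (v$j))" by (rule phiint)
    thus ?thesis unfolding v'_def rv_def inner_sum_vec by (simp add: of_rat_sum of_rat_mult)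
  qed
  have hw': "\<forall>w\<in>Wi. rv w \<bullet> v' = 0" using hw rvphi phi0 by simp
  have hc': "rv c \<bullet> v' = -1" using rvphi[of c] hc one
    by (metis of_rat_1 of_rat_minus add add_eq_0_iff2 phi0 add.right_inverse)
  have Sint: "\<forall>w\<in>S. \<forall>k. w$k \<in> \<int>" unfolding S_def rv_def by auto
  have xq': "xq Q v' = (\<Sum>w\<in>S. of_rat (\<phi> (u w)) *\<^sub>R w)"
  proof (rule vec_eq_iff[THEN iffD2], rule allI)
    fix k
    have "(xq Q v')$k = of_rat (\<phi> ((xq Q v)$k))"
    proof -
      have "\<phi> (\<Sum>i\<in>UNIV. v$i * of_int (Q$i$k)) = (\<Sum>i\<in>UNIV. \<phi> (v$i) * of_int (Q$i$k))" by (rule phiint')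
      thus ?thesis unfolding xq_def v'_def by (simp add: of_rat_sum of_rat_mult)
    qed
    also have "(xq Q v)$k = (\<Sum>w\<in>S. u w * w$k)" unfolding u by simp
    also have "\<dots> = (\<Sum>w\<in>S. u w * of_int (\<lfloor>w$k\<rfloor>))"
      using Sint by (intro sum.cong refl) (auto elim!: Ints_cases)
    also have "\<phi> \<dots> = (\<Sum>w\<in>S. \<phi> (u w) * of_int (\<lfloor>w$k\<rfloor>))" by (rule phiint')
    finally show "(xq Q v')$k = (\<Sum>w\<in>S. of_rat (\<phi> (u w)) *\<^sub>R w)$k"
      using Sint by (auto simp: of_rat_sum of_rat_mult intro!: sum.cong elim!: Ints_cases)
  qed
  have x'span: "xq Q v' \<in> span S" unfolding xq' by (intro span_sum span_scale span_base)
  define d where "d = v - v'"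
  have dorth: "\<forall>w\<in>S. w \<bullet> d = 0" using hw hw' hc hc' unfolding d_def S_def
    by (auto simp: inner_diff_right)
  have orth: "a \<in> span S \<Longrightarrow> a \<bullet> d = 0" for a
    using orthogonal_to_span[of a S d] dorth by (auto simp: orthogonal_def inner_commute)
  have "bil Q d d = bil Q v d - bil Q v' d" unfolding d_def bil_diff_left ..
  also have "\<dots> = 0" using orth[OF xspan] orth[OF x'span] by (simp add: bil_xq)
  finally have "d = 0" using posdef[OF Q] by force
  hence "v = v'" unfolding d_def by simp
  thus ?thesis unfolding v'_def by (metis Rats_of_rat vec_lambda_beta)
qed


definition fr :: "int^'r::finite^'r \<Rightarrow> int^'r \<Rightarrow> real^'r \<Rightarrow> real" where
  "fr Q c v = (rv c \<bullet> v) / sqrt (bil Q v v)"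

lemma xq_scale: "xq Q (a *\<^sub>R v) = a *\<^sub>R xq Q v"
  unfolding xq_def by (simp add: vec_eq_iff sum_distrib_left algebra_simps)

lemma xq_add: "xq Q (u + v) = xq Q u + xq Q v"
  unfolding xq_def by (simp add: vec_eq_iff sum.distrib algebra_simps)

lemma bil_scale: "bil Q (a *\<^sub>R v) (a *\<^sub>R v) = a^2 * bil Q v v"
  unfolding bil_xq xq_scale by (simp add: power2_eq_square)

lemma bil_sym: "inner_prod_ok Q \<Longrightarrow> bil Q u v = bil Q v u"
  unfolding bil_def inner_prod_ok_def
  by (subst sum.swap) (auto intro!: sum.cong simp: algebra_simps)

lemma bil_expand:
  assumes "inner_prod_ok Q"
  shows "bil Q (v + t *\<^sub>R d) (v + t *\<^sub>R d) = bil Q v v + t * (2 * bil Q v d) + t^2 * bil Q d d"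
proof -
  have "bil Q (v + t *\<^sub>R d) (v + t *\<^sub>R d) = bil Q v v + t * bil Q d v + t * bil Q v d + t^2 * bil Q d d"
    unfolding bil_xq xq_add xq_scale by (simp add: inner_add_left inner_add_right power2_eq_square algebra_simps)
  thus ?thesis using bil_sym[OF assms, of d v] by (simp add: algebra_simps)
qed

lemma fr_scale: "a > 0 \<Longrightarrow> fr Q c (a *\<^sub>R v) = fr Q c v"
  unfolding fr_def bil_scale by (simp add: real_sqrt_mult)

lemma bil_nonneg: "inner_prod_ok Q \<Longrightarrow> bil Q v v \<ge> 0"
  using posdef[of Q v] by (cases "v = 0") (auto simp: bil_def)

lemma real_opt:
  fixes Q :: "int^'r::finite^'r" and c m :: "int^'r"
  assumes Q: "inner_prod_ok Q" and fin: "finite Wi"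
    and mK: "\<forall>w\<in>Wi. rv w \<bullet> rv m \<ge> 0" and mc: "rv c \<bullet> rv m < 0"
  shows "\<exists>vs. (\<forall>w\<in>Wi. rv w \<bullet> vs \<ge> 0) \<and> rv c \<bullet> vs = -1 \<and>
     (\<forall>v. (\<forall>w\<in>Wi. rv w \<bullet> v \<ge> 0) \<and> v \<noteq> 0 \<longrightarrow> fr Q c vs \<le> fr Q c v) \<and> (\<forall>j. vs$j \<in> \<rat>)"
proof -
  define K where "K = {v. \<forall>w\<in>Wi. rv w \<bullet> v \<ge> 0}"
  have "K = (\<Inter>w\<in>Wi. {v. rv w \<bullet> v \<ge> 0})" unfolding K_def by auto
  hence "closed K" by (simp add: closed_INT closed_halfspace_ge)
  hence cpt: "compact (K \<inter> sphere 0 1)" by (simp add: closed_Int_compact)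
  have m0: "rv m \<noteq> 0" using mc by auto
  define m1 where "m1 = (1 / norm (rv m)) *\<^sub>R rv m"
  have m1K: "m1 \<in> K \<inter> sphere 0 1" using mK m0 unfolding m1_def K_def by auto
  have pos: "v \<in> K \<inter> sphere 0 1 \<Longrightarrow> bil Q v v > 0" for v using posdef[OF Q, of v] by (cases "v = 0") auto
  have pos': "v \<in> K \<Longrightarrow> norm v = 1 \<Longrightarrow> bil Q v v = 0 \<Longrightarrow> False" for v using pos[of v] by simp
  have cont: "continuous_on (K \<inter> sphere 0 1) (fr Q c)"
  proof -
    have cb: "continuous_on UNIV (\<lambda>v. bil Q v v)" unfolding bil_def by (intro continuous_intros)
    have "continuous_on (K \<inter> sphere 0 1) (\<lambda>v. (rv c \<bullet> v) / sqrt (bil Q v v))"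
      by (rule continuous_on_divide) (auto intro!: continuous_intros continuous_on_subset[OF cb] dest: pos')
    thus ?thesis unfolding fr_def[abs_def] .
  qed
  obtain u where uK: "u \<in> K \<inter> sphere 0 1" and umin: "\<forall>y\<in>K \<inter> sphere 0 1. fr Q c u \<le> fr Q c y"
    using continuous_attains_inf[OF cpt _ cont] m1K by blast
  have "fr Q c m1 = fr Q c (rv m)" unfolding m1_def using m0 by (simp add: fr_scale)
  also have "\<dots> < 0" unfolding fr_def using mc posdef[OF Q m0] by (simp add: divide_neg_pos)
  finally have "fr Q c u < 0" using umin m1K by force
  hence cu: "rv c \<bullet> u < 0" unfolding fr_def using pos[OF uK]
    by (metis divide_nonneg_pos linorder_not_le real_sqrt_gt_0_iff)
  define vs where "vs = (-1 / (rv c \<bullet> u)) *\<^sub>R u"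
  have vsK: "vs \<in> K" using uK cu unfolding vs_def K_def
    by (auto simp: inner_scaleR_right intro!: divide_nonneg_neg)
  have vsc: "rv c \<bullet> vs = -1" unfolding vs_def using cu by simp
  have frvs: "fr Q c vs = fr Q c u" unfolding vs_def using cu by (intro fr_scale) (simp add: divide_neg_neg)
  have vsmin: "fr Q c vs \<le> fr Q c v" if "v \<in> K" "v \<noteq> 0" for v
  proof -
    have "(1 / norm v) *\<^sub>R v \<in> K \<inter> sphere 0 1" using that unfolding K_def by auto
    hence "fr Q c u \<le> fr Q c ((1 / norm v) *\<^sub>R v)" using umin by blast
    thus ?thesis using frvs fr_scale[of "1 / norm v" Q c v] that by simp
  qed
  have vs0: "vs \<noteq> 0" using vsc by auto
  have qvs: "bil Q vs vs > 0" using posdef[OF Q vs0] .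
  have qmin: "bil Q vs vs \<le> bil Q v v" if "v \<in> K" "rv c \<bullet> v = -1" for v
  proof -
    have v0: "v \<noteq> 0" using that by auto
    have qv: "bil Q v v > 0" using posdef[OF Q v0] .
    have "-1 / sqrt (bil Q vs vs) \<le> -1 / sqrt (bil Q v v)"
      using vsmin[OF that(1) v0] unfolding fr_def vsc that(2) .
    hence "sqrt (bil Q vs vs) \<le> sqrt (bil Q v v)" using qv qvs by (simp add: divide_simps)
    thus ?thesis by simp
  qed
  define Wa where "Wa = {w\<in>Wi. rv w \<bullet> vs = 0}"
  have foc_ge: "bil Q vs d \<ge> 0" if hd: "\<forall>w\<in>Wa. rv w \<bullet> d = 0" "rv c \<bullet> d = 0" for d
  proof (rule ccontr)
    assume neg: "\<not> bil Q vs d \<ge> 0"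
    have ev1: "eventually (\<lambda>t. \<forall>w\<in>Wi - Wa. rv w \<bullet> (vs + t *\<^sub>R d) > 0) (at_right (0::real))"
    proof (rule eventually_ball_finite)
      show "finite (Wi - Wa)" using fin by simp
      show "\<forall>w\<in>Wi - Wa. eventually (\<lambda>t. rv w \<bullet> (vs + t *\<^sub>R d) > 0) (at_right 0)"
      proof
        fix w assume w: "w \<in> Wi - Wa"
        hence gt: "rv w \<bullet> vs > 0" using vsK unfolding Wa_def K_def by force
        have "((\<lambda>t. rv w \<bullet> (vs + t *\<^sub>R d)) \<longlongrightarrow> rv w \<bullet> (vs + 0 *\<^sub>R d)) (at_right (0::real))"
          by (intro tendsto_intros)
        thus "eventually (\<lambda>t. rv w \<bullet> (vs + t *\<^sub>R d) > 0) (at_right 0)"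
          using gt by (intro order_tendstoD(1)) auto
      qed
    qed
    have "((\<lambda>t. 2 * bil Q vs d + t * bil Q d d) \<longlongrightarrow> 2 * bil Q vs d + 0 * bil Q d d) (at_right (0::real))"
      by (intro tendsto_intros)
    hence ev2: "eventually (\<lambda>t. 2 * bil Q vs d + t * bil Q d d < 0) (at_right (0::real))"
      using neg by (intro order_tendstoD(2)) auto
    have ev3: "eventually (\<lambda>t. t > 0) (at_right (0::real))" by (simp add: eventually_at_right_less)
    obtain t where t1: "\<forall>w\<in>Wi - Wa. rv w \<bullet> (vs + t *\<^sub>R d) > 0"
      and t2: "2 * bil Q vs d + t * bil Q d d < 0" and t3: "t > 0"
      using eventually_happens'[OF _ eventually_conj[OF ev1 eventually_conj[OF ev2 ev3]]] by auto
    have inK: "vs + t *\<^sub>R d \<in> K"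
    proof -
      have "rv w \<bullet> (vs + t *\<^sub>R d) \<ge> 0" if "w \<in> Wi" for w
      proof (cases "w \<in> Wa")
        case True thus ?thesis using hd unfolding Wa_def by (simp add: inner_add_right)
      next
        case False
        hence "w \<in> Wi - Wa" using that by blast
        thus ?thesis using t1 by (meson less_imp_le)
      qed
      thus ?thesis unfolding K_def by auto
    qed
    have "rv c \<bullet> (vs + t *\<^sub>R d) = -1" using vsc hd by (simp add: inner_add_right)
    from qmin[OF inK this] have "bil Q vs vs \<le> bil Q (vs + t *\<^sub>R d) (vs + t *\<^sub>R d)" .
    also have "\<dots> = bil Q vs vs + t * (2 * bil Q vs d + t * bil Q d d)"
      unfolding bil_expand[OF Q] by (simp add: algebra_simps power2_eq_square)
    finally have "0 \<le> t * (2 * bil Q vs d + t * bil Q d d)" by simp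
    moreover have "t * (2 * bil Q vs d + t * bil Q d d) < 0" using t3 t2 by (rule mult_pos_neg)
    ultimately show False by linarith
  qed
  have foc: "\<forall>d. (\<forall>w\<in>Wa. rv w \<bullet> d = 0) \<and> rv c \<bullet> d = 0 \<longrightarrow> bil Q vs d = 0"
  proof (intro allI impI)
    fix d assume h: "(\<forall>w\<in>Wa. rv w \<bullet> d = 0) \<and> rv c \<bullet> d = 0"
    have "bil Q vs d \<ge> 0" using foc_ge h by blast
    moreover have "bil Q vs (-d) \<ge> 0" using foc_ge[of "-d"] h by simp
    moreover have "bil Q vs (-d) = - bil Q vs d" unfolding bil_xq by simp
    ultimately show "bil Q vs d = 0" by linarith
  qed
  have rat: "\<forall>j. vs$j \<in> \<rat>"
    by (rule rational_point[OF Q _ _ vsc foc]) (use fin in \<open>auto simp: Wa_def\<close>)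
  show ?thesis using vsK vsc vsmin rat unfolding K_def by blast
qed


lemma clear_denoms:
  fixes v :: "real^'r::finite"
  assumes "\<forall>j. v$j \<in> \<rat>"
  shows "\<exists>N::int. N > 0 \<and> (\<forall>j. of_int N * v$j \<in> \<int>)"
proof -
  have "\<forall>j. \<exists>b::int. b > 0 \<and> of_int b * v$j \<in> \<int>"
  proof
    fix j
    obtain r where r: "v$j = of_rat r" using assms by (auto elim: Rats_cases)
    obtain n d where nd: "quotient_of r = (n, d)" by (cases "quotient_of r") auto
    have d: "d > 0" using quotient_of_denom_pos[OF nd] .
    have "of_int d * v$j = of_int n" using quotient_of_div[OF nd] d r
      by (simp add: of_rat_divide)
    thus "\<exists>b::int. b > 0 \<and> of_int b * v$j \<in> \<int>" using d by (metis Ints_of_int)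
  qed
  then obtain b where b: "\<forall>j. b j > (0::int) \<and> of_int (b j) * v$j \<in> \<int>" by metis
  define N where "N = (\<Prod>j\<in>UNIV. b j)"
  have "N > 0" unfolding N_def using b by (simp add: prod_pos)
  moreover have "of_int N * v$j \<in> \<int>" for j
  proof -
    have "N = b j * (\<Prod>k\<in>UNIV - {j}. b k)" unfolding N_def
      by (simp add: prod.remove)
    hence "of_int N * v$j = (of_int (b j) * v$j) * of_int (\<Prod>k\<in>UNIV - {j}. b k)" by simp
    thus ?thesis using b by (metis Ints_mult Ints_of_int)
  qed
  ultimately show ?thesis by blast
qed

definition MS :: "('n::finite \<Rightarrow> int^'r::finite) \<Rightarrow> 'n set \<Rightarrow> int^'r \<Rightarrow> bool" where
  "MS wt S l \<longleftrightarrow> (\<forall>i\<in>S. pair (wt i) l \<ge> 0)"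

definition ratio :: "int^'r::finite^'r \<Rightarrow> int^'r \<Rightarrow> int^'r \<Rightarrow> real" where
  "ratio Q c l = real_of_int (pair c l) / lnorm Q l"

definition Popt where
  "Popt wt Q c S l \<longleftrightarrow> indivisible l \<and> MS wt S l \<and>
     (\<forall>m. m \<noteq> 0 \<and> MS wt S m \<longrightarrow> ratio Q c l \<le> ratio Q c m)"

lemma pair_rv: "real_of_int (pair c l) = rv c \<bullet> rv l"
  unfolding pair_def rv_def inner_sum_vec by simp

lemma lnorm_rv: "lnorm Q l = sqrt (bil Q (rv l) (rv l))"
  unfolding lnorm_def bil_def rv_def by simp

lemma ratio_fr: "ratio Q c l = fr Q c (rv l)"
  unfolding ratio_def fr_def pair_rv lnorm_rv ..

lemma rv_eq0: "rv l = 0 \<longleftrightarrow> l = 0"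
  unfolding rv_def by (simp add: vec_eq_iff)

lemma rv_smult: "rv (k *s l) = of_int k *\<^sub>R rv l"
  unfolding rv_def by (simp add: vec_eq_iff)

lemma rv_add: "rv (k + l) = rv k + rv l"
  unfolding rv_def by (simp add: vec_eq_iff)

lemma exists_min:
  fixes Q :: "int^'r::finite^'r" and c l' :: "int^'r" and wt :: "'n::finite \<Rightarrow> int^'r"
  assumes Q: "inner_prod_ok Q" and l': "MS wt S l'" "pair c l' < 0"
  shows "\<exists>l0. l0 \<noteq> 0 \<and> MS wt S l0 \<and> (\<forall>m. m \<noteq> 0 \<and> MS wt S m \<longrightarrow> ratio Q c l0 \<le> ratio Q c m)"
proof -
  have "\<forall>w\<in>wt ` S. rv w \<bullet> rv l' \<ge> 0" using l' unfolding MS_def by (auto simp flip: pair_rv)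
  moreover have "rv c \<bullet> rv l' < 0" using l' by (simp flip: pair_rv)
  ultimately obtain vs where vsK: "\<forall>w\<in>wt ` S. rv w \<bullet> vs \<ge> 0" and vsc: "rv c \<bullet> vs = -1"
    and vsmin: "\<forall>v. (\<forall>w\<in>wt ` S. rv w \<bullet> v \<ge> 0) \<and> v \<noteq> 0 \<longrightarrow> fr Q c vs \<le> fr Q c v"
    and rat: "\<forall>j. vs$j \<in> \<rat>"
    using real_opt[OF Q, of "wt ` S" l' c] by auto
  obtain N :: int where N: "N > 0" "\<forall>j. of_int N * vs$j \<in> \<int>" using clear_denoms[OF rat] by blast
  define l0 where "l0 = (\<chi> j. \<lfloor>of_int N * vs$j\<rfloor>)"
  have rl0: "rv l0 = of_int N *\<^sub>R vs" unfolding l0_def rv_def using N(2)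
    by (simp add: vec_eq_iff)
  have "rv c \<bullet> rv l0 = - of_int N" unfolding rl0 using vsc by simp
  hence l00: "l0 \<noteq> 0" using N(1) by (auto simp: rv_def inner_sum_vec)
  have "MS wt S l0" unfolding MS_def
  proof
    fix i assume "i \<in> S"
    hence "rv (wt i) \<bullet> vs \<ge> 0" using vsK by auto
    hence "real_of_int (pair (wt i) l0) \<ge> 0" unfolding pair_rv rl0 using N(1) by simp
    thus "pair (wt i) l0 \<ge> 0" by simp
  qed
  moreover have "ratio Q c l0 \<le> ratio Q c m" if "m \<noteq> 0" "MS wt S m" for m
  proof -
    have "ratio Q c l0 = fr Q c vs" unfolding ratio_fr rl0 using N(1) by (simp add: fr_scale)
    also have "\<dots> \<le> fr Q c (rv m)"
      using vsmin that unfolding MS_def by (auto simp flip: pair_rv simp: rv_eq0)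
    finally show ?thesis unfolding ratio_fr .
  qed
  ultimately show ?thesis using l00 by blast
qed



definition mu :: "int^'r::finite \<Rightarrow> nat" where
  "mu l = nat (\<Sum>i\<in>UNIV. \<bar>l$i\<bar>)"

lemma ratio_scale: "k > 0 \<Longrightarrow> ratio Q c (k *s l) = ratio Q c l"
  unfolding ratio_fr rv_smult by (simp add: fr_scale)

lemma MS_scale: "k > 0 \<Longrightarrow> MS wt S (k *s l) \<longleftrightarrow> MS wt S l"
proof -
  assume k: "k > 0"
  have "pair w (k *s l) = k * pair w l" for w
    unfolding pair_def by (simp add: sum_distrib_left algebra_simps)
  thus ?thesis unfolding MS_def using k by (simp add: zero_le_mult_iff)
qed

lemma exists_popt:
  fixes Q :: "int^'r::finite^'r" and c l' :: "int^'r" and wt :: "'n::finite \<Rightarrow> int^'r"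
  assumes Q: "inner_prod_ok Q" and l': "MS wt S l'" "pair c l' < 0"
  shows "\<exists>l. Popt wt Q c S l"
proof -
  define Mn where "Mn l \<longleftrightarrow> l \<noteq> 0 \<and> MS wt S l \<and> (\<forall>m. m \<noteq> 0 \<and> MS wt S m \<longrightarrow> ratio Q c l \<le> ratio Q c m)" for l
  obtain l0 where "Mn l0" using exists_min[OF Q l'] unfolding Mn_def by blast
  then obtain l1 where l1: "Mn l1" and l1min: "\<forall>y. Mn y \<longrightarrow> mu l1 \<le> mu y"
    using ex_has_least_nat[of Mn l0 mu] by blast
  have "indivisible l1" unfolding indivisible_def
  proof (intro conjI allI impI)
    show "l1 \<noteq> 0" using l1 Mn_def by blast
    fix k :: int and m assume km: "l1 = k *s m"
    show "k = 1 \<or> k = -1"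
    proof (rule ccontr)
      assume kn: "\<not> (k = 1 \<or> k = -1)"
      have k0: "k \<noteq> 0" using km \<open>l1 \<noteq> 0\<close> by auto
      define m' where "m' = sgn k *s m"
      have l1m': "l1 = \<bar>k\<bar> *s m'"
      proof -
        have eq: "\<bar>k\<bar> * (sgn k * x) = k * x" for x :: int
          by (metis abs_mult_sgn mult.assoc)
        show ?thesis unfolding m'_def km vec_eq_iff vector_smult_component eq by simp
      qed
      have ka: "\<bar>k\<bar> > 0" using k0 by simp
      have m'0: "m' \<noteq> 0" using l1m' \<open>l1 \<noteq> 0\<close> by auto
      have "Mn m'" unfolding Mn_def using l1 m'0 ratio_scale[OF ka, of Q c m'] MS_scale[OF ka, of wt S m']
        unfolding Mn_def l1m' by simp
      hence le: "mu l1 \<le> mu m'" using l1min by blast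
      have F1: "(\<Sum>i\<in>UNIV. \<bar>l1$i\<bar>) = \<bar>k\<bar> * (\<Sum>i\<in>UNIV. \<bar>m'$i\<bar>)"
        unfolding l1m' by (simp add: sum_distrib_left abs_mult)
      have F2: "(\<Sum>i\<in>UNIV. \<bar>m'$i\<bar>) > 0"
      proof -
        obtain i where "m'$i \<noteq> 0" using m'0 by (auto simp: vec_eq_iff)
        hence "\<bar>m'$i\<bar> > 0" by simp
        moreover have "\<bar>m'$i\<bar> \<le> (\<Sum>i\<in>UNIV. \<bar>m'$i\<bar>)" by (rule member_le_sum) auto
        ultimately show ?thesis by linarith
      qed
      have F3: "\<bar>k\<bar> \<ge> 2" using kn k0 by auto
      have "(\<Sum>i\<in>UNIV. \<bar>l1$i\<bar>) > (\<Sum>i\<in>UNIV. \<bar>m'$i\<bar>)"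
      proof -
        have "2 * (\<Sum>i\<in>UNIV. \<bar>m'$i\<bar>) \<le> \<bar>k\<bar> * (\<Sum>i\<in>UNIV. \<bar>m'$i\<bar>)"
          using F2 F3 by (intro mult_right_mono) auto
        thus ?thesis using F1 F2 by linarith
      qed
      with le F2 show False unfolding mu_def by simp
    qed
  qed
  thus ?thesis using l1 unfolding Popt_def Mn_def by blast
qed



lemma pair_add: "pair c (k + l) = pair c k + pair c l"
  unfolding pair_def by (simp add: sum.distrib algebra_simps)

lemma lnorm_pos: "inner_prod_ok Q \<Longrightarrow> l \<noteq> 0 \<Longrightarrow> lnorm Q l > 0"
  unfolding lnorm_rv using posdef[of Q "rv l"] rv_eq0[of l] by simp

lemma indiv_div:
  assumes "indivisible l" and "\<forall>i. q dvd l$i"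
  shows "q = 1 \<or> q = -1"
proof -
  have "l = q *s (\<chi> i. l$i div q)" using assms(2) by (simp add: vec_eq_iff)
  thus ?thesis using assms(1) unfolding indivisible_def by blast
qed

lemma popt_unique:
  fixes Q :: "int^'r::finite^'r" and c l' :: "int^'r" and wt :: "'n::finite \<Rightarrow> int^'r"
  assumes Q: "inner_prod_ok Q" and l': "MS wt S l'" "pair c l' < 0"
    and P1: "Popt wt Q c S l1" and P2: "Popt wt Q c S l2"
  shows "l1 = l2"
proof -
  have l10: "l1 \<noteq> 0" and l20: "l2 \<noteq> 0" using P1 P2 unfolding Popt_def indivisible_def by auto
  have l'0: "l' \<noteq> 0" using l' unfolding pair_def by auto
  have "ratio Q c l' < 0" unfolding ratio_def using l' lnorm_pos[OF Q l'0] by (simp add: divide_neg_pos)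
  have r12: "ratio Q c l1 = ratio Q c l2" using P1 P2 l10 l20 unfolding Popt_def by force
  have rneg: "ratio Q c l1 < 0" using P1 l' l'0 \<open>ratio Q c l' < 0\<close> unfolding Popt_def by force
  define \<rho> where "\<rho> = ratio Q c l1"
  define a where "a = rv l1"
  define b where "b = rv l2"
  define n1 where "n1 = sqrt (bil Q a a)"
  define n2 where "n2 = sqrt (bil Q b b)"
  have n1: "n1 > 0" unfolding n1_def a_def using lnorm_pos[OF Q l10] by (simp add: lnorm_rv)
  have n2: "n2 > 0" unfolding n2_def b_def using lnorm_pos[OF Q l20] by (simp add: lnorm_rv)
  have ca: "rv c \<bullet> a = \<rho> * n1" unfolding \<rho>_def ratio_fr fr_def a_def n1_def using n1
    unfolding n1_def a_def by simp
  have cb: "rv c \<bullet> b = \<rho> * n2" unfolding \<rho>_def r12 unfolding ratio_fr fr_def b_def n2_def using n2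
    unfolding n2_def b_def by simp
  have \<rho>neg: "\<rho> < 0" using rneg \<rho>_def by simp
  have s0: "l1 + l2 \<noteq> 0"
  proof
    assume "l1 + l2 = 0"
    hence "a + b = 0" unfolding a_def b_def by (metis rv_add rv_eq0)
    hence "rv c \<bullet> a + rv c \<bullet> b = 0" by (simp flip: inner_add_right)
    with ca cb n1 n2 \<rho>neg show False
      by (smt (verit) mult_neg_pos)
  qed
  have "MS wt S (l1 + l2)" using P1 P2 unfolding Popt_def MS_def by (simp add: pair_add)
  hence "\<rho> \<le> ratio Q c (l1 + l2)" using P1 s0 unfolding Popt_def \<rho>_def by blast
  also have "ratio Q c (l1 + l2) = (\<rho> * n1 + \<rho> * n2) / sqrt (bil Q (a + b) (a + b))"
    unfolding ratio_fr fr_def rv_add a_def[symmetric] b_def[symmetric] inner_add_right ca cb ..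
  finally have ineq: "\<rho> \<le> (\<rho> * n1 + \<rho> * n2) / sqrt (bil Q (a + b) (a + b))" .
  define n12 where "n12 = sqrt (bil Q (a + b) (a + b))"
  have "a + b \<noteq> 0" unfolding a_def b_def using s0 by (metis rv_add rv_eq0)
  hence n12: "n12 > 0" unfolding n12_def using posdef[OF Q] by simp
  have "\<rho> * n12 \<le> \<rho> * (n1 + n2)" using ineq n12 unfolding n12_def[symmetric]
    by (simp add: field_simps)
  hence "n1 + n2 \<le> n12" using \<rho>neg by simp
  hence "(n1 + n2)^2 \<le> n12^2" using n1 n2 by (intro power_mono) auto
  also have "n12^2 = bil Q a a + 2 * bil Q a b + bil Q b b"
    unfolding n12_def using bil_nonneg[OF Q, of "a+b"] bil_expand[OF Q, of a 1 b] by simp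
  also have "(n1 + n2)^2 = bil Q a a + 2 * n1 * n2 + bil Q b b"
    unfolding n1_def n2_def using bil_nonneg[OF Q, of a] bil_nonneg[OF Q, of b]
    by (simp add: power2_eq_square algebra_simps)
  finally have B: "n1 * n2 \<le> bil Q a b" by simp
  define t where "t = n1 / n2"
  have "bil Q (a + (-t) *\<^sub>R b) (a + (-t) *\<^sub>R b) = bil Q a a - t * (2 * bil Q a b) + t^2 * bil Q b b"
    using bil_expand[OF Q, of a "-t" b] by simp
  also have "\<dots> \<le> n1^2 - t * (2 * (n1 * n2)) + t^2 * n2^2"
  proof -
    have "t \<ge> 0" unfolding t_def using n1 n2 by simp
    hence I: "t * (2 * (n1 * n2)) \<le> t * (2 * bil Q a b)" using B by (intro mult_left_mono) auto
    have E: "bil Q a a = n1^2" "bil Q b b = n2^2"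
      unfolding n1_def n2_def using bil_nonneg[OF Q, of a] bil_nonneg[OF Q, of b] by simp_all
    show ?thesis unfolding E using I by linarith
  qed
  also have "\<dots> = 0" unfolding t_def using n2 by (simp add: field_simps power2_eq_square)
  finally have "a + (-t) *\<^sub>R b = 0" using posdef[OF Q, of "a + (-t) *\<^sub>R b"] by force
  hence ab: "a = t *\<^sub>R b" by (simp add: algebra_simps)
  have tpos: "t > 0" unfolding t_def using n1 n2 by simp
  have comp: "real_of_int (l1$i) = t * real_of_int (l2$i)" for i
    using ab unfolding a_def b_def rv_def by (simp add: vec_eq_iff)
  obtain j where j: "l2$j \<noteq> 0" using l20 by (auto simp: vec_eq_iff)
  define p where "p = l1$j"
  define q where "q = l2$j"
  have cross: "l1$i * q = l2$i * p" for i
  proof -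
    have "real_of_int (l1$i * q) = real_of_int (l2$i * p)"
      unfolding p_def q_def using comp[of i] comp[of j] by simp
    thus ?thesis by (simp only: of_int_eq_iff)
  qed
  have pq: "p * q > 0"
  proof -
    have "real_of_int (p * q) = t * (real_of_int q)^2" unfolding p_def q_def using comp[of j]
      by (simp add: power2_eq_square)
    moreover have "t * (real_of_int q)^2 > 0" using tpos j unfolding q_def by simp
    ultimately show ?thesis by linarith
  qed
  have g0: "gcd p q \<noteq> 0" using j unfolding q_def by simp
  define g where "g = gcd p q"
  have g0': "g \<noteq> 0" using g0 g_def by simp
  obtain p' q' where pq': "p = p' * g" "q = q' * g" "coprime p' q'"
    using gcd_coprime_exists[OF g0] unfolding g_def[symmetric] by blast
  have cross': "l1$i * q' = l2$i * p'" for i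
    using cross[of i] g0' unfolding pq'(1,2) by (simp add: mult.assoc[symmetric])
  have "\<forall>i. q' dvd l2$i"
  proof
    fix i
    have "q' dvd l2$i * p'" using cross'[of i] by (metis dvd_triv_right)
    thus "q' dvd l2$i" using coprime_dvd_mult_left_iff[of q' p' "l2$i"] pq'(3)
      by (simp add: coprime_commute)
  qed
  hence q'1: "q' = 1 \<or> q' = -1" using P2 indiv_div unfolding Popt_def by blast
  have "\<forall>i. p' dvd l1$i"
  proof
    fix i
    have "p' dvd l1$i * q'" using cross'[of i] by (metis dvd_triv_right)
    thus "p' dvd l1$i" using coprime_dvd_mult_left_iff[of p' q' "l1$i"] pq'(3) by simp
  qed
  hence p'1: "p' = 1 \<or> p' = -1" using P1 indiv_div unfolding Popt_def by blast
  have "p' * q' > 0"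
  proof -
    have "p * q = (p' * q') * g^2" unfolding pq'(1,2) by (simp add: power2_eq_square algebra_simps)
    moreover have "g^2 > 0" using g0' by simp
    ultimately show ?thesis using pq by (metis zero_less_mult_pos2)
  qed
  hence "p' = q'" using p'1 q'1 by auto
  hence "l1$i = l2$i" for i using cross'[of i] q'1 by auto
  thus ?thesis by (simp add: vec_eq_iff)
qed



lemma powi_nonneg: "k \<ge> 0 \<Longrightarrow> (t::complex) powi k = t ^ nat k"
  by (metis nat_0_le power_int_of_nat)

lemma powi_neg_cancel: "k < 0 \<Longrightarrow> (t::complex) \<noteq> 0 \<Longrightarrow> t ^ nat (-k) * t powi k = 1"
  unfolding power_int_def by (simp add: power_mult_distrib[symmetric])

lemma limit_exists_iff:
  "limit_exists wt l x \<longleftrightarrow> (\<forall>i. x$i \<noteq> 0 \<longrightarrow> pair (wt i) l \<ge> 0)"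
proof
  assume "limit_exists wt l x"
  then obtain y where y: "((\<lambda>t. ops_act wt l t x) \<longlongrightarrow> y) (at 0)" unfolding limit_exists_def by blast
  show "\<forall>i. x$i \<noteq> 0 \<longrightarrow> pair (wt i) l \<ge> 0"
  proof (intro allI impI, rule ccontr)
    fix i assume xi: "x$i \<noteq> 0" and kn: "\<not> pair (wt i) l \<ge> 0"
    define k where "k = pair (wt i) l"
    have k: "k < 0" using kn k_def by simp
    have c: "((\<lambda>t. t powi k * x$i) \<longlongrightarrow> y$i) (at 0)"
      using tendsto_vec_nth[OF y, of i] unfolding ops_act_def k_def by simp
    have "((\<lambda>t. t ^ nat (-k) * (t powi k * x$i)) \<longlongrightarrow> 0 ^ nat (-k) * y$i) (at (0::complex))"
      by (intro tendsto_intros c)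
    moreover have "(0::complex) ^ nat (-k) * y$i = 0" using k by simp
    ultimately have "((\<lambda>t. t ^ nat (-k) * (t powi k * x$i)) \<longlongrightarrow> 0) (at (0::complex))" by simp
    moreover have "eventually (\<lambda>t. t ^ nat (-k) * (t powi k * x$i) = x$i) (at (0::complex))"
      using powi_neg_cancel[OF k] by (auto simp: eventually_at_filter mult.assoc[symmetric])
    ultimately have "((\<lambda>t. x$i) \<longlongrightarrow> 0) (at (0::complex))" by (rule Lim_transform_eventually)
    hence "x$i = 0" by (simp add: tendsto_const_iff)
    with xi show False by simp
  qed
next
  assume h: "\<forall>i. x$i \<noteq> 0 \<longrightarrow> pair (wt i) l \<ge> 0"
  have "((\<lambda>t. ops_act wt l t x) \<longlongrightarrow> (\<chi> i. 0 ^ nat (pair (wt i) l) * x$i)) (at 0)"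
  proof (rule vec_tendstoI)
    fix i
    show "((\<lambda>t. ops_act wt l t x $ i) \<longlongrightarrow> (\<chi> i. 0 ^ nat (pair (wt i) l) * x$i) $ i) (at 0)"
    proof (cases "x$i = 0")
      case True thus ?thesis unfolding ops_act_def by simp
    next
      case False
      hence "pair (wt i) l \<ge> 0" using h by blast
      thus ?thesis unfolding ops_act_def using powi_nonneg by (simp, intro tendsto_intros)
    qed
  qed
  thus "limit_exists wt l x" unfolding limit_exists_def by blast
qed



lemma limit_cell: "x \<in> Lcell S \<Longrightarrow> limit_exists wt l x \<longleftrightarrow> MS wt S l"
  unfolding limit_exists_iff MS_def Lcell_def by auto

lemma unstable_cell: "x \<in> Lcell S \<Longrightarrow> unstable wt c x \<longleftrightarrow> (\<exists>l. MS wt S l \<and> pair c l < 0)"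
  unfolding unstable_def using limit_cell by blast

lemma opt_cell: "x \<in> Lcell S \<Longrightarrow> opt_ops wt Q c x = (THE l. Popt wt Q c S l)"
  unfolding opt_ops_def Popt_def ratio_def using limit_cell[of x S wt] by simp

lemma cell_ex: "(\<chi> i. if i \<in> S then (1::complex) else 0) \<in> Lcell S"
  unfolding Lcell_def by simp

lemma MS_mono: "MS wt S l \<Longrightarrow> T \<subseteq> S \<Longrightarrow> MS wt T l"
  unfolding MS_def by auto

lemma ex1_popt:
  assumes Q: "inner_prod_ok Q" and l': "MS wt S l'" "pair c l' < 0"
  shows "\<exists>!l. Popt wt Q c S l"
  using exists_popt[OF Q l'] popt_unique[OF Q l'] by blast

theorem lemma3p16:
  fixes wt :: "'n::finite \<Rightarrow> int^'r::finite"
    and Q :: "int^'r^'r"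
    and c l :: "int^'r"
    and A B C :: "'n set"
  assumes "inner_prod_ok Q"
    and "l \<in> Lambda_set wt Q c"
    and "C \<subseteq> A"
    and "Lcell C \<subseteq> stratum wt Q c l"
    and "Lcell A \<subseteq> stratum wt Q c l"
    and "C \<subseteq> B" and "B \<subseteq> A"
  shows "Lcell B \<subseteq> stratum wt Q c l"
proof -
  note Q = assms(1)
  have sA: "(\<chi> i. if i \<in> A then (1::complex) else 0) \<in> stratum wt Q c l" using assms(5) cell_ex by blast
  have sC: "(\<chi> i. if i \<in> C then (1::complex) else 0) \<in> stratum wt Q c l" using assms(4) cell_ex by blast
  obtain l' where l': "MS wt A l'" "pair c l' < 0"
    using sA unstable_cell[OF cell_ex] unfolding stratum_def by blast
  have lB: "MS wt B l'" and lC: "MS wt C l'" using l' assms MS_mono by blast+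
  have PA: "Popt wt Q c A l"
  proof -
    have "l = (THE l. Popt wt Q c A l)" using sA opt_cell[OF cell_ex[of A], of wt Q c] unfolding stratum_def by auto
    thus ?thesis using theI'[OF ex1_popt[OF Q l']] by simp
  qed
  have PC: "Popt wt Q c C l"
  proof -
    have "l = (THE l. Popt wt Q c C l)" using sC opt_cell[OF cell_ex[of C], of wt Q c] unfolding stratum_def by auto
    thus ?thesis using theI'[OF ex1_popt[OF Q lC l'(2)]] by simp
  qed
  have PB: "Popt wt Q c B l" unfolding Popt_def
  proof (intro conjI allI impI)
    show "indivisible l" using PA unfolding Popt_def by blast
    show "MS wt B l" using PA assms(7) MS_mono unfolding Popt_def by blast
    fix m assume "m \<noteq> 0 \<and> MS wt B m"
    hence "m \<noteq> 0 \<and> MS wt C m" using assms(6) MS_mono by blast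
    thus "ratio Q c l \<le> ratio Q c m" using PC unfolding Popt_def by blast
  qed
  show ?thesis
  proof
    fix x assume x: "x \<in> Lcell B"
    have "unstable wt c x" using unstable_cell[OF x] lB l' by blast
    moreover have "opt_ops wt Q c x = l"
      unfolding opt_cell[OF x] using the1_equality[OF ex1_popt[OF Q lB l'(2)] PB] .
    ultimately show "x \<in> stratum wt Q c l" unfolding stratum_def by blast
  qed
qed

end
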